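(* Let $m,n$ be positive integers. (1) If $n$ is odd, $m$ is odd, and at least one of $m,n$ is larger than $1$, then there is no nullhomotopic knight's tour on $\mathcal{M}_{m,n}$ and no nullhomotopic knight's tour on $\mathcal{K}_{m,n}$. (2) Suppose $n$ is even. If $m$ is even, there is no generating knight's tour on $\mathcal{M}_{m,n}$ and no Möbius knight's tour on $\mathcal{K}_{m,n}$. If $m$ is odd, there is no cylindrical knight's tour on $\mathcal{K}_{m,n}$.
   Context: Let $\mathcal{P}$ be the graph with vertex set $\mathbb{Z}^2$ in which $(a,b)$ and $(a',b')$ are adjacent iff $\{|a-a'|,|b-b'|\}=\{1,2\}$, and let $\mathcal{S}_m$ be its induced subgraph on $\{(a,b): 0\le a<m\}$. Let $\tau(a,b)=(a+m,b)$ and $\sigma(a,b)=(m-1-a,\,b+n)$. Define the multigraph $\mathcal{M}_{m,n}=\mathcal{S}_m/\langle\sigma\rangle$ and the pseudograph $\mathcal{K}_{m,n}=\mathcal{P}/\langle\tau,\sigma\rangle$ (vertices and edges are orbits of vertices and edges under these free actions; multiple edges and loops may occur); these are the knight's move graphs of the $m\times n$ Möbius strip and Klein bottle boards, and the quotient maps are coverings. A knight's tour is a closed walk visiting every vertex exactly once apart from the repeated start/end vertex (a Hamiltonian cycle). Regard a tour as a closed walk based at vertex $(0,0)$ and take its unique lift (to $\mathcal{S}_m$, resp. $\mathcal{P}$) starting at $(0,0)$. A tour on $\mathcal{M}_{m,n}$ is nullhomotopic if the lift ends at $(0,0)$ and generating if it ends at $(m-1,\pm n)$. A tour on $\mathcal{K}_{m,n}$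 is nullhomotopic if the lift ends at $(0,0)$, cylindrical if it ends at $(\pm m,0)$, and Möbius if it ends at $(m-1,\pm n)$. *)

theory Defs
  imports Main
begin

definition knight_adj :: "int \<times> int \<Rightarrow> int \<times> int \<Rightarrow> bool" where
  "knight_adj p q \<longleftrightarrow> {\<bar>fst p - fst q\<bar>, \<bar>snd p - snd q\<bar>} = {1, 2}"

definition tau :: "int \<Rightarrow> int \<times> int \<Rightarrow> int \<times> int" where
  "tau m p = (fst p + m, snd p)"

definition sigma :: "int \<Rightarrow> int \<Rightarrow> int \<times> int \<Rightarrow> int \<times> int" where
  "sigma m n p = (m - 1 - fst p, snd p + n)"

definition sigma_pow :: "int \<Rightarrow> int \<Rightarrow> int \<Rightarrow> int \<times> int \<Rightarrow> int \<times> int" where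
  "sigma_pow m n k p =
     (if k \<ge> 0 then (sigma m n ^^ nat k) p
      else (inv (sigma m n) ^^ nat (- k)) p)"

definition tau_pow :: "int \<Rightarrow> int \<Rightarrow> int \<times> int \<Rightarrow> int \<times> int" where
  "tau_pow m j p = (fst p + j * m, snd p)"

text \<open>Same vertex of the Moebius board M_{m,n}: same orbit under <sigma>.\<close>
definition mob_equiv :: "int \<Rightarrow> int \<Rightarrow> int \<times> int \<Rightarrow> int \<times> int \<Rightarrow> bool" where
  "mob_equiv m n p q \<longleftrightarrow> (\<exists>k::int. q = sigma_pow m n k p)"

text \<open>Same vertex of the Klein bottle board K_{m,n}: same orbit under <tau, sigma>.
  Since sigma tau sigma^-1 = tau^-1, every group element has the form tau^j sigma^k.\<close>
definition klein_equiv :: "int \<Rightarrow> int \<Rightarrow> int \<times> int \<Rightarrow> int \<times> int \<Rightarrow> bool" where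
  "klein_equiv m n p q \<longleftrightarrow> (\<exists>j k::int. q = tau_pow m j (sigma_pow m n k p))"

text \<open>Lift (to S_m, starting at (0,0)) of a knight's tour (Hamiltonian closed walk) on M_{m,n}
  based at the vertex [(0,0)], of length N: consecutive lifted points are knight-adjacent
  and lie in the strip 0 <= a < m; the first N points project to pairwise distinct vertices
  covering every vertex of M_{m,n}; and the last point projects to the start vertex.\<close>
definition mob_tour_lift :: "int \<Rightarrow> int \<Rightarrow> (nat \<Rightarrow> int \<times> int) \<Rightarrow> nat \<Rightarrow> bool" where
  "mob_tour_lift m n p N \<longleftrightarrow>
     p 0 = (0, 0) \<and>
     (\<forall>i\<le>N. 0 \<le> fst (p i) \<and> fst (p i) < m) \<and>
     (\<forall>i<N. knight_adj (p i) (p (Suc i))) \<and>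
     (\<forall>i<N. \<forall>j<N. i \<noteq> j \<longrightarrow> \<not> mob_equiv m n (p i) (p j)) \<and>
     (\<forall>q. 0 \<le> fst q \<and> fst q < m \<longrightarrow> (\<exists>i<N. mob_equiv m n (p i) q)) \<and>
     mob_equiv m n (p 0) (p N)"

text \<open>Same for K_{m,n}, lifted to the full plane graph P.\<close>
definition klein_tour_lift :: "int \<Rightarrow> int \<Rightarrow> (nat \<Rightarrow> int \<times> int) \<Rightarrow> nat \<Rightarrow> bool" where
  "klein_tour_lift m n p N \<longleftrightarrow>
     p 0 = (0, 0) \<and>
     (\<forall>i<N. knight_adj (p i) (p (Suc i))) \<and>
     (\<forall>i<N. \<forall>j<N. i \<noteq> j \<longrightarrow> \<not> klein_equiv m n (p i) (p j)) \<and>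
     (\<forall>q. \<exists>i<N. klein_equiv m n (p i) q) \<and>
     klein_equiv m n (p 0) (p N)"

definition mob_tour_ending_at :: "int \<Rightarrow> int \<Rightarrow> int \<times> int \<Rightarrow> bool" where
  "mob_tour_ending_at m n e \<longleftrightarrow> (\<exists>p N. mob_tour_lift m n p N \<and> p N = e)"

definition klein_tour_ending_at :: "int \<Rightarrow> int \<Rightarrow> int \<times> int \<Rightarrow> bool" where
  "klein_tour_ending_at m n e \<longleftrightarrow> (\<exists>p N. klein_tour_lift m n p N \<and> p N = e)"

definition nullhomotopic_mob_tour_exists :: "int \<Rightarrow> int \<Rightarrow> bool" where
  "nullhomotopic_mob_tour_exists m n \<longleftrightarrow> mob_tour_ending_at m n (0, 0)"

definition generating_mob_tour_exists :: "int \<Rightarrow> int \<Rightarrow> bool" where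
  "generating_mob_tour_exists m n \<longleftrightarrow>
     mob_tour_ending_at m n (m - 1, n) \<or> mob_tour_ending_at m n (m - 1, - n)"

definition nullhomotopic_klein_tour_exists :: "int \<Rightarrow> int \<Rightarrow> bool" where
  "nullhomotopic_klein_tour_exists m n \<longleftrightarrow> klein_tour_ending_at m n (0, 0)"

definition cylindrical_klein_tour_exists :: "int \<Rightarrow> int \<Rightarrow> bool" where
  "cylindrical_klein_tour_exists m n \<longleftrightarrow>
     klein_tour_ending_at m n (m, 0) \<or> klein_tour_ending_at m n (- m, 0)"

definition moebius_klein_tour_exists :: "int \<Rightarrow> int \<Rightarrow> bool" where
  "moebius_klein_tour_exists m n \<longleftrightarrow>
     klein_tour_ending_at m n (m - 1, n) \<or> klein_tour_ending_at m n (m - 1, - n)"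

end

theory Submission imports Defs begin

definition flp :: "int \<Rightarrow> bool \<Rightarrow> int \<Rightarrow> int" where
  "flp m e a = (if e then a else m - 1 - a)"

lemma sigma_iter: "(sigma m n ^^ k) p = (flp m (even k) (fst p), snd p + int k * n)"
  by (induction k) (auto simp: sigma_def flp_def algebra_simps)

lemma inv_sigma: "inv (sigma m n) = (\<lambda>p. (m - 1 - fst p, snd p - n))"
  by (rule inv_equality) (auto simp: sigma_def)

lemma inv_sigma_iter: "(inv (sigma m n) ^^ k) p = (flp m (even k) (fst p), snd p - int k * n)"
  by (induction k) (auto simp: inv_sigma flp_def algebra_simps)

lemma sigma_pow_eq: "sigma_pow m n k p = (flp m (even k) (fst p), snd p + k * n)"
proof (cases "k \<ge> 0")
  case True
  then show ?thesis by (simp add: sigma_pow_def sigma_iter even_nat_iff)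
next
  case False
  then have "even (nat (-k)) = even k" by (simp add: even_nat_iff)
  with False show ?thesis by (simp add: sigma_pow_def inv_sigma_iter)
qed

lemma knight_parity: "knight_adj p q \<Longrightarrow> odd (fst p + snd p + fst q + snd q)"
proof -
  assume "knight_adj p q"
  then have h: "{\<bar>fst p - fst q\<bar>, \<bar>snd p - snd q\<bar>} = {1, 2}" by (simp add: knight_adj_def)
  then have "(\<bar>fst p - fst q\<bar> = 1 \<and> \<bar>snd p - snd q\<bar> = 2) \<or> (\<bar>fst p - fst q\<bar> = 2 \<and> \<bar>snd p - snd q\<bar> = 1)"
    by (smt (verit) doubleton_eq_iff insert_absorb2 insert_not_empty singleton_insert_inj_eq)
  then show ?thesis by (auto simp: abs_if split: if_splits) presburger+
qed

lemma flp_comp: "flp m e1 (flp m e2 a) = flp m (e1 = e2) a"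
  by (auto simp: flp_def)

lemma flp_par: "flp m ((A = B) = B) a = flp m A a"
  by (cases B) auto

lemma flp_par2: "flp m (B = (B = A)) a = flp m A a"
  by (cases B) auto

lemma flp_add: "flp m e (x + j*m) mod m = flp m e x mod m"
proof -
  have "flp m e (x + j*m) = flp m e x + (if e then j else -j) * m"
    by (auto simp: flp_def algebra_simps)
  then show ?thesis by simp
qed

lemma flp_mod_cancel: "flp m e x mod m = flp m e y mod m \<Longrightarrow> x mod m = y mod m"
proof -
  assume h: "flp m e x mod m = flp m e y mod m"
  show ?thesis
  proof (cases e)
    case True then show ?thesis using h by (simp add: flp_def)
  next
    case False
    then have "m dvd ((m - 1 - x) - (m - 1 - y))" using h by (simp add: flp_def mod_eq_dvd_iff)
    then have "m dvd (x - y)"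
      by (metis dvd_minus_iff minus_diff_eq diff_diff_eq2 diff_diff_cancel add_diff_cancel_left' diff_add_cancel
           diff_diff_eq)
    then show ?thesis by (simp add: mod_eq_dvd_iff)
  qed
qed

definition canonM :: "int \<Rightarrow> int \<Rightarrow> int \<times> int \<Rightarrow> int \<times> int" where
  "canonM m n q = (flp m (even (snd q div n)) (fst q), snd q mod n)"

definition canonK :: "int \<Rightarrow> int \<Rightarrow> int \<times> int \<Rightarrow> int \<times> int" where
  "canonK m n q = (flp m (even (snd q div n)) (fst q) mod m, snd q mod n)"

lemma mob_equiv_iff:
  assumes "0 < n"
  shows "mob_equiv m n p q \<longleftrightarrow> canonM m n p = canonM m n q"
proof
  assume "mob_equiv m n p q"
  then obtain k where q: "q = (flp m (even k) (fst p), snd p + k * n)"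
    by (auto simp: mob_equiv_def sigma_pow_eq)
  have d: "(snd p + k * n) div n = snd p div n + k" using assms by simp
  have r: "(snd p + k * n) mod n = snd p mod n" by simp
  show "canonM m n p = canonM m n q"
    unfolding canonM_def q using d r by (simp add: flp_comp flp_par)
next
  assume h: "canonM m n p = canonM m n q"
  define k where "k = snd q div n - snd p div n"
  have r: "snd q mod n = snd p mod n" using h by (simp add: canonM_def)
  have e1: "snd q div n * n + snd q mod n = snd q" by (rule div_mult_mod_eq)
  have e2: "snd p div n * n + snd p mod n = snd p" by (rule div_mult_mod_eq)
  have s1: "snd q = snd p + k * n"
    unfolding k_def left_diff_distrib using r e1 e2 by linarith
  have "fst q = flp m (even (snd q div n)) (flp m (even (snd p div n)) (fst p))"
    using h unfolding canonM_def by (simp add: flp_comp flp_def)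
  also have "\<dots> = flp m (even k) (fst p)" unfolding k_def by (simp add: flp_comp)
  finally have "q = sigma_pow m n k p" using s1 by (simp add: sigma_pow_eq prod_eq_iff)
  then show "mob_equiv m n p q" by (auto simp: mob_equiv_def)
qed

lemma klein_equiv_iff:
  assumes "0 < n"
  shows "klein_equiv m n p q \<longleftrightarrow> canonK m n p = canonK m n q"
proof
  assume "klein_equiv m n p q"
  then obtain j k where q: "q = (flp m (even k) (fst p) + j * m, snd p + k * n)"
    by (auto simp: klein_equiv_def sigma_pow_eq tau_pow_def)
  have d: "(snd p + k * n) div n = snd p div n + k" using assms by simp
  have r: "(snd p + k * n) mod n = snd p mod n" by simp
  show "canonK m n p = canonK m n q"
    unfolding canonK_def q using d r by (simp add: flp_comp flp_add flp_par)
next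
  assume h: "canonK m n p = canonK m n q"
  define k where "k = snd q div n - snd p div n"
  have r: "snd q mod n = snd p mod n" using h by (simp add: canonK_def)
  have e1: "snd q div n * n + snd q mod n = snd q" by (rule div_mult_mod_eq)
  have e2: "snd p div n * n + snd p mod n = snd p" by (rule div_mult_mod_eq)
  have s1: "snd q = snd p + k * n"
    unfolding k_def left_diff_distrib using r e1 e2 by linarith
  define s where "s = flp m (even k) (fst p)"
  have "flp m (even (snd p div n)) (fst p) = flp m (even (snd q div n)) s"
    unfolding s_def k_def by (simp add: flp_comp flp_par2)
  then have "flp m (even (snd q div n)) (fst q) mod m = flp m (even (snd q div n)) s mod m"
    using h unfolding canonK_def by simp
  then have "fst q mod m = s mod m" by (rule flp_mod_cancel)
  then have "fst q = s + (fst q div m - s div m) * m"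
    using div_mult_mod_eq[of "fst q" m] div_mult_mod_eq[of s m]
    unfolding left_diff_distrib by linarith
  then have "q = tau_pow m (fst q div m - s div m) (sigma_pow m n k p)"
    using s1 by (simp add: sigma_pow_eq tau_pow_def prod_eq_iff s_def)
  then show "klein_equiv m n p q" by (auto simp: klein_equiv_def)
qed


lemma canonM_fix: "0 < n \<Longrightarrow> 0 \<le> snd q \<Longrightarrow> snd q < n \<Longrightarrow> canonM m n q = q"
  by (simp add: canonM_def flp_def prod_eq_iff)

lemma canonK_fix: "0 < n \<Longrightarrow> 0 \<le> fst q \<Longrightarrow> fst q < m \<Longrightarrow> 0 \<le> snd q \<Longrightarrow> snd q < n \<Longrightarrow> canonK m n q = q"
  by (simp add: canonK_def flp_def prod_eq_iff)

lemma mob_card: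
  assumes m: "0 < m" and n: "0 < n" and T: "mob_tour_lift m n p N"
  shows "int N = m * n"
proof -
  define F where "F = {0..<m} \<times> {0..<n}"
  have b: "bij_betw (canonM m n \<circ> p) {..<N} F"
  proof (rule bij_betwI')
    fix i j assume "i \<in> {..<N}" "j \<in> {..<N}"
    then have ij: "i < N" "j < N" by auto
    have dist: "\<forall>i<N. \<forall>j<N. i \<noteq> j \<longrightarrow> \<not> mob_equiv m n (p i) (p j)"
      using T unfolding mob_tour_lift_def by blast
    show "((canonM m n \<circ> p) i = (canonM m n \<circ> p) j) = (i = j)"
    proof
      assume "(canonM m n \<circ> p) i = (canonM m n \<circ> p) j"
      then have "mob_equiv m n (p i) (p j)" using mob_equiv_iff[OF n] by simp
      then show "i = j" using dist ij by blast
    qed simp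
  next
    fix i assume "i \<in> {..<N}"
    then have "i \<le> N" by simp
    moreover have "\<forall>i\<le>N. 0 \<le> fst (p i) \<and> fst (p i) < m" using T unfolding mob_tour_lift_def by blast
    ultimately have a: "0 \<le> fst (p i)" "fst (p i) < m" by blast+
    have "0 \<le> flp m e (fst (p i)) \<and> flp m e (fst (p i)) < m" for e using a by (simp add: flp_def)
    moreover have "0 \<le> snd (p i) mod n" "snd (p i) mod n < n" using n by simp_all
    ultimately show "(canonM m n \<circ> p) i \<in> F" by (simp add: F_def canonM_def)
  next
    fix q assume q: "q \<in> F"
    have cov: "\<forall>q. 0 \<le> fst q \<and> fst q < m \<longrightarrow> (\<exists>i<N. mob_equiv m n (p i) q)"
      using T unfolding mob_tour_lift_def by blast
    have qb: "0 \<le> fst q" "fst q < m" "0 \<le> snd q" "snd q < n" using q by (auto simp: F_def)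
    obtain i where "i < N" "mob_equiv m n (p i) q" using cov qb by blast
    then have "canonM m n (p i) = q" using canonM_fix[of n q m] qb n mob_equiv_iff[OF n] by simp
    then show "\<exists>i\<in>{..<N}. q = (canonM m n \<circ> p) i" using \<open>i < N\<close> by auto
  qed
  have "N = card F" using bij_betw_same_card[OF b] by simp
  also have "\<dots> = nat m * nat n" by (simp add: F_def card_cartesian_product)
  finally show ?thesis using m n by (simp add: nat_mult_distrib[symmetric])
qed

lemma klein_card:
  assumes m: "0 < m" and n: "0 < n" and T: "klein_tour_lift m n p N"
  shows "int N = m * n"
proof -
  define F where "F = {0..<m} \<times> {0..<n}"
  have b: "bij_betw (canonK m n \<circ> p) {..<N} F"
  proof (rule bij_betwI')
    fix i j assume "i \<in> {..<N}" "j \<in> {..<N}"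
    then have ij: "i < N" "j < N" by auto
    have dist: "\<forall>i<N. \<forall>j<N. i \<noteq> j \<longrightarrow> \<not> klein_equiv m n (p i) (p j)"
      using T unfolding klein_tour_lift_def by blast
    show "((canonK m n \<circ> p) i = (canonK m n \<circ> p) j) = (i = j)"
    proof
      assume "(canonK m n \<circ> p) i = (canonK m n \<circ> p) j"
      then have "klein_equiv m n (p i) (p j)" using klein_equiv_iff[OF n] by simp
      then show "i = j" using dist ij by blast
    qed simp
  next
    fix i assume "i \<in> {..<N}"
    have "0 \<le> snd (p i) mod n" "snd (p i) mod n < n" using n by simp_all
    moreover have "0 \<le> flp m e (fst (p i)) mod m" "flp m e (fst (p i)) mod m < m" for e using m by simp_all
    ultimately show "(canonK m n \<circ> p) i \<in> F" by (simp add: F_def canonK_def)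
  next
    fix q assume q: "q \<in> F"
    have cov: "\<forall>q. \<exists>i<N. klein_equiv m n (p i) q"
      using T unfolding klein_tour_lift_def by blast
    have qb: "0 \<le> fst q" "fst q < m" "0 \<le> snd q" "snd q < n" using q by (auto simp: F_def)
    obtain i where "i < N" "klein_equiv m n (p i) q" using cov by blast
    then have "canonK m n (p i) = q" using canonK_fix[of n q m] qb n klein_equiv_iff[OF n] by simp
    then show "\<exists>i\<in>{..<N}. q = (canonK m n \<circ> p) i" using \<open>i < N\<close> by auto
  qed
  have "N = card F" using bij_betw_same_card[OF b] by simp
  also have "\<dots> = nat m * nat n" by (simp add: F_def card_cartesian_product)
  finally show ?thesis using m n by (simp add: nat_mult_distrib[symmetric])
qed

lemma walk_parity:
  assumes "p 0 = (0, 0)" "\<forall>i<N. knight_adj (p i) (p (Suc i))"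
  shows "i \<le> N \<Longrightarrow> even (fst (p i) + snd (p i)) = even i"
proof (induction i)
  case 0 then show ?case using assms by simp
next
  case (Suc i)
  have "knight_adj (p i) (p (Suc i))" using Suc.prems assms by simp
  then have o: "odd (fst (p i) + snd (p i) + fst (p (Suc i)) + snd (p (Suc i)))"
    by (rule knight_parity)
  have ih: "even (fst (p i) + snd (p i)) = even i" using Suc by simp
  show ?case using o ih by presburger
qed

lemma mob_end:
  assumes "0 < m" "0 < n" "mob_tour_ending_at m n e"
  shows "even (fst e + snd e) = even (m * n)"
proof -
  obtain p N where T: "mob_tour_lift m n p N" "p N = e" using assms by (auto simp: mob_tour_ending_at_def)
  have "int N = m * n" using mob_card assms T by blast
  moreover have "even (fst (p N) + snd (p N)) = even N"
    using T walk_parity[of p N N] by (auto simp: mob_tour_lift_def)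
  ultimately show ?thesis using T by (metis even_of_nat)
qed

lemma klein_end:
  assumes "0 < m" "0 < n" "klein_tour_ending_at m n e"
  shows "even (fst e + snd e) = even (m * n)"
proof -
  obtain p N where T: "klein_tour_lift m n p N" "p N = e" using assms by (auto simp: klein_tour_ending_at_def)
  have "int N = m * n" using klein_card assms T by blast
  moreover have "even (fst (p N) + snd (p N)) = even N"
    using T walk_parity[of p N N] by (auto simp: klein_tour_lift_def)
  ultimately show ?thesis using T by (metis even_of_nat)
qed

theorem proposition3p5:
  fixes m n :: int
  assumes "0 < m" and "0 < n"
  shows "(odd n \<and> odd m \<and> (1 < m \<or> 1 < n) \<longrightarrow>
            \<not> nullhomotopic_mob_tour_exists m n \<and> \<not> nullhomotopic_klein_tour_exists m n)
       \<and> (even n \<longrightarrow>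
            (even m \<longrightarrow> \<not> generating_mob_tour_exists m n \<and> \<not> moebius_klein_tour_exists m n)
          \<and> (odd m \<longrightarrow> \<not> cylindrical_klein_tour_exists m n))"
proof -
  note M = mob_end[OF assms] and K = klein_end[OF assms]
  have A: "odd n \<and> odd m \<longrightarrow> \<not> nullhomotopic_mob_tour_exists m n \<and> \<not> nullhomotopic_klein_tour_exists m n"
  proof
    assume h: "odd n \<and> odd m"
    then have "odd (m * n)" by simp
    then show "\<not> nullhomotopic_mob_tour_exists m n \<and> \<not> nullhomotopic_klein_tour_exists m n"
      unfolding nullhomotopic_mob_tour_exists_def nullhomotopic_klein_tour_exists_def
      using M[of "(0,0)"] K[of "(0,0)"] \<open>odd (m * n)\<close> by (simp, blast)
  qed
  have B: "even n \<and> even m \<longrightarrow> \<not> generating_mob_tour_exists m n \<and> \<not> moebius_klein_tour_exists m n"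
  proof
    assume h: "even n \<and> even m"
    then have e: "even (m * n)" by simp
    have o1: "odd (m - 1 + n)" "odd (m - 1 + - n)" using h by presburger+
    show "\<not> generating_mob_tour_exists m n \<and> \<not> moebius_klein_tour_exists m n"
      unfolding generating_mob_tour_exists_def moebius_klein_tour_exists_def
      using M[of "(m - 1, n)"] K[of "(m - 1, n)"] M[of "(m - 1, - n)"] K[of "(m - 1, - n)"] e o1
      by (simp only: fst_conv snd_conv) blast
  qed
  have C: "even n \<and> odd m \<longrightarrow> \<not> cylindrical_klein_tour_exists m n"
  proof
    assume h: "even n \<and> odd m"
    then have e: "even (m * n)" by simp
    have o1: "odd (m + 0)" "odd (- m + 0)" using h by presburger+
    show "\<not> cylindrical_klein_tour_exists m n"
      unfolding cylindrical_klein_tour_exists_def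
      using K[of "(m, 0)"] K[of "(- m, 0)"] e o1 by (simp only: fst_conv snd_conv) blast
  qed
  show ?thesis using A B C by blast
qed

end
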